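(* Let $A=\sum_{j=1}^\infty E_j$, where $E_j$ are rank-one projections and the series converges in the strong operator topology. Let $\lambda=\langle\lambda_j\rangle_{j=1}^\infty$ with $0\le\lambda_j<\frac12$ for all $j$ and $\sum_{j=1}^\infty\lambda_j=\infty$. Let $B=\sum_{k=1}^Ks_kF_k$ with $K\in\mathbb N$, $0\le s_k<1$, and $F_k$ rank-one projections. Then $\langle1-\lambda_j\rangle_{j=1}^\infty\in\operatorname{Adm}(A+B)$.
   Context: $\operatorname{Adm}(X)$ is the set of sequences $\xi\in\ell^\infty_+$ such that $X=\sum_j\xi_jP_j$ for some rank-one projections $P_j$ (series converging in the strong operator topology if infinite). *)

theory Defs
  imports "HOL-Analysis.Analysis"
begin

text \<open>The inner product is conjugate-linear
  in the first and linear in the second argument.\<close>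

class scaleC =
  fixes scaleC :: "complex \<Rightarrow> 'a \<Rightarrow> 'a"  (infixr "*\<^sub>C" 75)

class complex_vector = real_vector + scaleC +
  assumes scaleC_add_right: "a *\<^sub>C (x + y) = a *\<^sub>C x + a *\<^sub>C y"
    and scaleC_add_left: "(a + b) *\<^sub>C x = a *\<^sub>C x + b *\<^sub>C x"
    and scaleC_scaleC: "a *\<^sub>C (b *\<^sub>C x) = (a * b) *\<^sub>C x"
    and scaleC_one: "1 *\<^sub>C x = x"
    and scaleR_scaleC: "r *\<^sub>R x = complex_of_real r *\<^sub>C x"

class complex_inner = complex_vector + real_normed_vector +
  fixes cinner :: "'a \<Rightarrow> 'a \<Rightarrow> complex"
  assumes cinner_commute: "cinner x y = cnj (cinner y x)"
    and cinner_add_right: "cinner x (y + z) = cinner x y + cinner x z"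
    and cinner_scaleC_right: "cinner x (a *\<^sub>C y) = a * cinner x y"
    and norm_eq_sqrt_cinner: "norm x = sqrt (Re (cinner x x))"

class chilbert_space = complex_inner + complete_space

definition rank_one_proj :: "('a::complex_inner \<Rightarrow> 'a) \<Rightarrow> bool" where
  "rank_one_proj P \<longleftrightarrow> (\<exists>e. norm e = 1 \<and> (\<forall>x. P x = cinner e x *\<^sub>C e))"

definition Adm :: "('a::complex_inner \<Rightarrow> 'a) \<Rightarrow> (nat \<Rightarrow> real) set" where
  "Adm X = {\<xi>. bounded (range \<xi>) \<and> (\<forall>j. 0 \<le> \<xi> j) \<and>
     (\<exists>P. (\<forall>j. rank_one_proj (P j)) \<and> (\<forall>x. (\<lambda>j. \<xi> j *\<^sub>R P j x) sums X x))}"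

end

theory Submission
  imports Defs
begin

section \<open>Basic algebra in complex inner product spaces\<close>


lemma scaleC_zero_left [simp]: "(0::complex) *\<^sub>C (x::'a::complex_vector) = 0"
  using scaleR_scaleC[of 0 x] by simp

lemma scaleC_minus1: "(-1::complex) *\<^sub>C (x::'a::complex_vector) = - x"
  using scaleR_scaleC[of "-1" x] by simp

lemma scaleC_zero_right [simp]: "a *\<^sub>C (0::'a::complex_vector) = 0"
proof -
  have "a *\<^sub>C (0::'a) = a *\<^sub>C 0 + a *\<^sub>C 0" by (metis add_0 scaleC_add_right)
  then show ?thesis by simp
qed

lemma cinner_add_left: "cinner (x + y) z = cinner x z + cinner (y::'a::complex_inner) z"
  by (metis cinner_commute cinner_add_right complex_cnj_add)

lemma cinner_scaleC_left: "cinner (a *\<^sub>C x) (y::'a::complex_inner) = cnj a * cinner x y"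
proof -
  have "cinner (a *\<^sub>C x) y = cnj (cinner y (a *\<^sub>C x))" by (rule cinner_commute)
  also have "\<dots> = cnj a * cnj (cinner y x)" by (simp add: cinner_scaleC_right)
  also have "\<dots> = cnj a * cinner x y" by (simp add: cinner_commute[of x y])
  finally show ?thesis .
qed

lemma cinner_scaleR_right: "cinner x (r *\<^sub>R (y::'a::complex_inner)) = of_real r * cinner x y"
  by (simp add: scaleR_scaleC cinner_scaleC_right)

lemma cinner_scaleR_left: "cinner (r *\<^sub>R x) (y::'a::complex_inner) = of_real r * cinner x y"
  by (simp add: scaleR_scaleC cinner_scaleC_left)

lemma cinner_zero_right [simp]: "cinner x (0::'a::complex_inner) = 0"
  using cinner_scaleR_right[of x 0 0] by simp

lemma cinner_zero_left [simp]: "cinner (0::'a::complex_inner) x = 0"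
  using cinner_scaleR_left[of 0 0 x] by simp

lemma cinner_minus_left: "cinner (- x) (y::'a::complex_inner) = - cinner x y"
proof -
  have "cinner (- x) y = cinner ((-1) *\<^sub>R x) y" by simp
  also have "\<dots> = - cinner x y" unfolding cinner_scaleR_left by simp
  finally show ?thesis .
qed

lemma cinner_minus_right: "cinner x (- (y::'a::complex_inner)) = - cinner x y"
proof -
  have "cinner x (- y) = cinner x ((-1) *\<^sub>R y)" by simp
  also have "\<dots> = - cinner x y" unfolding cinner_scaleR_right by simp
  finally show ?thesis .
qed

lemma cinner_diff_right: "cinner x (y - (z::'a::complex_inner)) = cinner x y - cinner x z"
  unfolding diff_conv_add_uminus cinner_add_right cinner_minus_right by (rule refl)

lemma cinner_sum_right: "cinner x (\<Sum>i\<in>I. f i) = (\<Sum>i\<in>I. cinner (x::'a::complex_inner) (f i))"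
proof (induction I rule: infinite_finite_induct)
  case (insert a F)
  then show ?case by (simp add: cinner_add_right)
qed simp_all

lemma cinner_self_Im: "Im (cinner x (x::'a::complex_inner)) = 0"
proof -
  have "cinner x x = cnj (cinner x x)" by (rule cinner_commute)
  then have "Im (cinner x x) = Im (cnj (cinner x x))" by (rule arg_cong)
  moreover have "Im (cnj (cinner x x)) = - Im (cinner x x)" by simp
  ultimately show ?thesis by linarith
qed

lemma norm_sq_cinner: "(norm x)^2 = Re (cinner x (x::'a::complex_inner))"
proof -
  have "0 \<le> Re (cinner x x)"
  proof (rule ccontr)
    assume "\<not> ?thesis"
    then have "Re (cinner x x) < 0" by linarith
    then have "sqrt (Re (cinner x x)) < 0" by (simp only: real_sqrt_lt_0_iff)
    then show False using norm_eq_sqrt_cinner[of x] norm_ge_zero[of x] by linarith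
  qed
  then show ?thesis using norm_eq_sqrt_cinner[of x] by (simp only: real_sqrt_pow2)
qed

lemma cinner_self_eq: "cinner x (x::'a::complex_inner) = of_real ((norm x)^2)"
  by (simp add: norm_sq_cinner complex_eq_iff cinner_self_Im)

lemma Re_cinner_sym: "Re (cinner y x) = Re (cinner x (y::'a::complex_inner))"
  using cinner_commute[of y x] by simp

lemma norm_add_sq: "(norm (x + y))^2 = (norm x)^2 + (norm y)^2 + 2 * Re (cinner x (y::'a::complex_inner))"
  unfolding norm_sq_cinner by (simp add: cinner_add_left cinner_add_right Re_cinner_sym[of y x])

lemma norm_scaleC_sq: "(norm (a *\<^sub>C x))^2 = (cmod a)^2 * (norm (x::'a::complex_inner))^2"
proof -
  have "cinner (a *\<^sub>C x) (a *\<^sub>C x) = (cnj a * a) * cinner x x"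
    by (simp add: cinner_scaleC_left cinner_scaleC_right mult_ac)
  then have "(norm (a *\<^sub>C x))^2 = Re ((cnj a * a) * cinner x x)"
    by (simp only: norm_sq_cinner)
  also have "cnj a * a = of_real ((cmod a)^2)"
    using complex_norm_square[of a] by (simp add: mult.commute)
  also have "cinner x x = of_real ((norm x)^2)" by (rule cinner_self_eq)
  finally show ?thesis by (simp only: of_real_mult[symmetric] Re_complex_of_real)
qed

lemma norm_scaleC: "norm (a *\<^sub>C x) = cmod a * norm (x::'a::complex_inner)"
proof -
  have "(norm (a *\<^sub>C x))^2 = (cmod a * norm x)^2"
    using norm_scaleC_sq[of a x] by (simp add: power_mult_distrib)
  then show ?thesis by (simp add: power2_eq_iff_nonneg)
qed


lemma scaleC_comb: "k *\<^sub>C (a *\<^sub>R u + b *\<^sub>R (v::'a::complex_vector)) = (k * of_real a) *\<^sub>C u + (k * of_real b) *\<^sub>C v"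
  by (simp only: scaleR_scaleC scaleC_add_right scaleC_scaleC)

lemma scaleC_comb_add: "(a1 *\<^sub>C u + b1 *\<^sub>C v) + (a2 *\<^sub>C u + b2 *\<^sub>C (v::'a::complex_vector)) = (a1 + a2) *\<^sub>C u + (b1 + b2) *\<^sub>C v"
  by (simp only: scaleC_add_left add.assoc add.left_commute)

definition rop :: "'a::complex_inner \<Rightarrow> 'a \<Rightarrow> 'a" where
  "rop z x = cinner z x *\<^sub>C z"

lemma cinner_comb: "cinner (a *\<^sub>R u + b *\<^sub>R v) (x::'a::complex_inner) = of_real a * cinner u x + of_real b * cinner v x"
  by (simp only: cinner_add_left cinner_scaleR_left)

lemma rop_scaleR: "rop (r *\<^sub>R z) x = (r^2) *\<^sub>R rop z (x::'a::complex_inner)"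
proof -
  have "rop (r *\<^sub>R z) x = (of_real r * cinner z x) *\<^sub>C (of_real r *\<^sub>C z)"
    unfolding rop_def cinner_scaleR_left unfolding scaleR_scaleC by (rule refl)
  also have "\<dots> = (of_real (r^2) * cinner z x) *\<^sub>C z"
    by (simp add: scaleC_scaleC power2_eq_square mult_ac)
  also have "\<dots> = (r^2) *\<^sub>R rop z x"
    unfolding rop_def scaleR_scaleC scaleC_scaleC by (rule refl)
  finally show ?thesis .
qed

lemma rop_uminus: "rop (- z) x = rop z (x::'a::complex_inner)"
proof -
  have "rop (- z) x = rop ((-1) *\<^sub>R z) x" by simp
  also have "\<dots> = rop z x" unfolding rop_scaleR by simp
  finally show ?thesis .
qed

lemma rop_zero [simp]: "rop 0 x = (0::'a::complex_inner)"
  unfolding rop_def by simp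

lemma rop_rot:
  assumes "c^2 + s^2 = 1"
  shows "rop (c *\<^sub>R u + s *\<^sub>R v) x + rop ((-s) *\<^sub>R u + c *\<^sub>R v) x = rop u x + rop (v::'a::complex_inner) x"
proof -
  define p where "p = cinner u x"
  define q where "q = cinner v x"
  have h: "(of_real c)^2 + (of_real s)^2 = (1::complex)"
    using arg_cong[OF assms, of "of_real :: real \<Rightarrow> complex"] by simp
  have "rop (c *\<^sub>R u + s *\<^sub>R v) x + rop ((-s) *\<^sub>R u + c *\<^sub>R v) x
    = ((of_real c * p + of_real s * q) * of_real c + (of_real (-s) * p + of_real c * q) * of_real (-s)) *\<^sub>C u
      + ((of_real c * p + of_real s * q) * of_real s + (of_real (-s) * p + of_real c * q) * of_real c) *\<^sub>C v"
    unfolding rop_def cinner_comb scaleC_comb scaleC_comb_add p_def q_def by (rule refl)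
  also have "((of_real c * p + of_real s * q) * of_real c + (of_real (-s) * p + of_real c * q) * of_real (-s)) = ((of_real c)^2 + (of_real s)^2) * p"
    by (simp add: algebra_simps power2_eq_square)
  also have "((of_real c * p + of_real s * q) * of_real s + (of_real (-s) * p + of_real c * q) * of_real c) = ((of_real c)^2 + (of_real s)^2) * q"
    by (simp add: algebra_simps power2_eq_square)
  finally show ?thesis unfolding h rop_def p_def q_def by simp
qed

lemma norm_comb_sq: "(norm (a *\<^sub>R u + b *\<^sub>R v))^2 = a^2 * (norm u)^2 + b^2 * (norm v)^2 + 2 * a * b * Re (cinner u (v::'a::complex_inner))"
  unfolding norm_add_sq by (simp add: cinner_scaleR_left cinner_scaleR_right power_mult_distrib)

lemma norm_rot:
  assumes "c^2 + s^2 = 1"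
  shows "(norm (c *\<^sub>R u + s *\<^sub>R v))^2 + (norm ((-s) *\<^sub>R u + c *\<^sub>R v))^2 = (norm u)^2 + (norm (v::'a::complex_inner))^2"
proof -
  have "(norm (c *\<^sub>R u + s *\<^sub>R v))^2 + (norm ((-s) *\<^sub>R u + c *\<^sub>R v))^2
     = (c^2 + s^2) * (norm u)^2 + (c^2 + s^2) * (norm v)^2"
    unfolding norm_comb_sq by (simp add: algebra_simps)
  then show ?thesis using assms by simp
qed

lemma rop_unit:
  assumes "norm z = 1"
  shows "rank_one_proj (rop z)"
  unfolding rank_one_proj_def rop_def using assms by blast


section \<open>Elementary moves\<close>

lemma sqrt_one_minus_sq: "0 \<le> c \<Longrightarrow> c \<le> 1 \<Longrightarrow> (sqrt (1 - c^2))^2 = 1 - c^2"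
  by (simp add: power_le_one)

lemma norm_move_sq:
  assumes "0 \<le> c" "c \<le> 1"
  shows "(norm (c *\<^sub>R u + sqrt (1 - c^2) *\<^sub>R v))^2
     = c^2 * (norm u)^2 + (1 - c^2) * (norm (v::'a::complex_inner))^2 + 2 * c * sqrt (1 - c^2) * Re (cinner u v)"
  unfolding norm_comb_sq sqrt_one_minus_sq[OF assms] by simp

lemma cont_move: "continuous_on S (\<lambda>c. (norm (c *\<^sub>R u + sqrt (1 - c^2) *\<^sub>R (v::'a::complex_inner)))^2)"
  by (intro continuous_intros)

lemma merge_move:
  assumes "min ((norm u)^2) ((norm v)^2) \<le> t" "t \<le> max ((norm u)^2) ((norm (v::'a::complex_inner))^2)"
  shows "\<exists>c. 0 \<le> c \<and> c \<le> 1 \<and> (norm (c *\<^sub>R u + sqrt (1 - c^2) *\<^sub>R v))^2 = t"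
proof -
  define f where "f = (\<lambda>c. (norm (c *\<^sub>R u + sqrt (1 - c^2) *\<^sub>R v))^2)"
  have f0: "f 0 = (norm v)^2" unfolding f_def by simp
  have f1: "f 1 = (norm u)^2" unfolding f_def by simp
  have cf: "continuous_on {0..1} f" unfolding f_def by (rule cont_move)
  show ?thesis
  proof (cases "(norm u)^2 \<le> (norm v)^2")
    case True
    then have "f 1 \<le> t" "t \<le> f 0" using assms f0 f1 by auto
    from IVT2'[of f 1 t 0, OF this _ cf] show ?thesis unfolding f_def by auto
  next
    case False
    then have "f 0 \<le> t" "t \<le> f 1" using assms f0 f1 by auto
    from IVT'[of f 0 t 1, OF this _ cf] show ?thesis unfolding f_def by auto
  qed
qed

lemma main_move:
  assumes "(norm u)^2 \<le> 1 - l" "norm (v::'a::complex_inner) = 1" "0 \<le> Re (cinner u v)" "0 \<le> l" "l \<le> 1"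
  shows "\<exists>c. sqrt l \<le> c \<and> c \<le> 1 \<and> (norm (c *\<^sub>R u + sqrt (1 - c^2) *\<^sub>R v))^2 = 1 - l"
proof -
  define f where "f = (\<lambda>c. (norm (c *\<^sub>R u + sqrt (1 - c^2) *\<^sub>R v))^2)"
  have f1: "f 1 = (norm u)^2" unfolding f_def by simp
  have sl: "0 \<le> sqrt l" "sqrt l \<le> 1" using assms by auto
  have "f (sqrt l) = l * (norm u)^2 + (1 - l) + 2 * sqrt l * sqrt (1 - l) * Re (cinner u v)"
    unfolding f_def norm_move_sq[OF sl] using assms by simp
  moreover have "0 \<le> 2 * sqrt l * sqrt (1 - l) * Re (cinner u v)" using assms by simp
  moreover have "0 \<le> l * (norm u)^2" using assms by simp
  ultimately have "1 - l \<le> f (sqrt l)" by linarith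
  moreover have "f 1 \<le> 1 - l" using f1 assms by simp
  moreover have cf: "continuous_on {sqrt l..1} f" unfolding f_def by (rule cont_move)
  ultimately show ?thesis using IVT2'[of f 1 "1 - l" "sqrt l"] sl unfolding f_def by auto
qed


definition mrgc :: "'a::complex_inner \<Rightarrow> 'a \<Rightarrow> real \<Rightarrow> real" where
  "mrgc u v t = (SOME c. 0 \<le> c \<and> c \<le> 1 \<and> (norm (c *\<^sub>R u + sqrt (1 - c^2) *\<^sub>R v))^2 = t)"

definition mainc :: "'a::complex_inner \<Rightarrow> 'a \<Rightarrow> real \<Rightarrow> real" where
  "mainc u v l = (SOME c. sqrt l \<le> c \<and> c \<le> 1 \<and> (norm (c *\<^sub>R u + sqrt (1 - c^2) *\<^sub>R v))^2 = 1 - l)"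

definition sfix :: "'a::complex_inner \<Rightarrow> 'a \<Rightarrow> 'a" where
  "sfix u e = (if 0 \<le> Re (cinner u e) then e else - e)"

definition mainstep :: "'a::complex_inner \<Rightarrow> 'a \<Rightarrow> real \<Rightarrow> 'a \<times> 'a" where
  "mainstep y v l = (let c = mainc y v l; s = sqrt (1 - c^2) in (c *\<^sub>R y + s *\<^sub>R v, (-s) *\<^sub>R y + c *\<^sub>R v))"

definition mrgstep :: "'a::complex_inner \<Rightarrow> 'a \<Rightarrow> real \<Rightarrow> 'a \<times> 'a" where
  "mrgstep y w t = (let c = mrgc y w t; s = sqrt (1 - c^2) in (c *\<^sub>R y + s *\<^sub>R w, (-s) *\<^sub>R y + c *\<^sub>R w))"

definition stepf :: "(nat \<Rightarrow> 'a::complex_inner) \<Rightarrow> real \<Rightarrow> 'a \<times> 'a list \<times> nat \<Rightarrow> 'a \<times> ('a \<times> 'a list \<times> nat)" where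
  "stepf e l st = (case st of (y, ws, m) \<Rightarrow>
     (let t = 1 - l; a = (norm y)^2;
          mn = (let p = mainstep y (sfix y (e m)) l in (fst p, (snd p, ws, Suc m)))
      in (case ws of
            w # rest \<Rightarrow>
              if min a ((norm w)^2) \<le> t \<and> t \<le> max a ((norm w)^2)
              then (let p = mrgstep y w t in (fst p, (snd p, rest, m)))
              else if t \<le> a then (sqrt (t / (norm w)^2) *\<^sub>R w, (y, sqrt (1 - t / (norm w)^2) *\<^sub>R w # rest, m))
              else mn
          | [] \<Rightarrow> if t \<le> a then (sqrt (t / a) *\<^sub>R y, (sqrt (1 - t / a) *\<^sub>R y, [], m)) else mn)))"

lemma mainstep_props:
  assumes "(norm y)^2 < 1 - l" "norm e = 1" "0 \<le> l" "l < 1/2"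
    and "mainstep y (sfix y e) l = (z, y')"
  shows "(norm z)^2 = 1 - l" "(norm y')^2 = (norm y)^2 + l"
    "\<And>x. rop z x + rop y' x = rop y x + rop e x"
    "\<exists>\<sigma> \<gamma> v. y' = \<sigma> *\<^sub>R y + \<gamma> *\<^sub>R v \<and> \<sigma>^2 + \<gamma>^2 \<le> 1 \<and> \<sigma>^2 \<le> 1 - l \<and> (v = e \<or> v = - e)"
proof -
  define v where "v = sfix y e"
  have nv: "norm v = 1" using assms(2) unfolding v_def sfix_def by auto
  have rv: "0 \<le> Re (cinner y v)"
    unfolding v_def sfix_def by (auto simp: cinner_minus_right)
  define c where "c = mainc y v l"
  have "\<exists>c. sqrt l \<le> c \<and> c \<le> 1 \<and> (norm (c *\<^sub>R y + sqrt (1 - c^2) *\<^sub>R v))^2 = 1 - l"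
    using main_move[of y l v] assms nv rv by auto
  then have "sqrt l \<le> c \<and> c \<le> 1 \<and> (norm (c *\<^sub>R y + sqrt (1 - c^2) *\<^sub>R v))^2 = 1 - l"
    unfolding c_def mainc_def by (rule someI_ex)
  then have c: "sqrt l \<le> c" "c \<le> 1" "(norm (c *\<^sub>R y + sqrt (1 - c^2) *\<^sub>R v))^2 = 1 - l" by auto
  define s where "s = sqrt (1 - c^2)"
  have c0: "0 \<le> c" using c(1) assms(3) by (meson order.trans real_sqrt_ge_zero)
  have cs: "c^2 + s^2 = 1" unfolding s_def using sqrt_one_minus_sq[OF c0 c(2)] by simp
  have zy: "z = c *\<^sub>R y + s *\<^sub>R v" "y' = (-s) *\<^sub>R y + c *\<^sub>R v"
    using assms(5) unfolding mainstep_def v_def[symmetric] c_def[symmetric] s_def[symmetric] Let_def by auto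
  show nz: "(norm z)^2 = 1 - l" using c(3) zy unfolding s_def by simp
  show "(norm y')^2 = (norm y)^2 + l"
    using norm_rot[OF cs, of y v] zy nz nv by simp
  have rv: "rop v x = rop e x" for x unfolding v_def sfix_def by (simp add: rop_uminus)
  show "\<And>x. rop z x + rop y' x = rop y x + rop e x"
    using rop_rot[OF cs, of y v] zy rv by simp
  have "l \<le> c^2" using c(1) assms(3) by (metis power_mono real_sqrt_ge_zero real_sqrt_pow2)
  then have "(-s)^2 + c^2 \<le> 1 \<and> (-s)^2 \<le> 1 - l \<and> (v = e \<or> v = - e)"
    using cs unfolding v_def sfix_def by auto
  then show "\<exists>\<sigma> \<gamma> v. y' = \<sigma> *\<^sub>R y + \<gamma> *\<^sub>R v \<and> \<sigma>^2 + \<gamma>^2 \<le> 1 \<and> \<sigma>^2 \<le> 1 - l \<and> (v = e \<or> v = - e)"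
    using zy by blast
qed

lemma mrgstep_props:
  assumes "min ((norm y)^2) ((norm w)^2) \<le> t" "t \<le> max ((norm y)^2) ((norm w)^2)"
    and "mrgstep y w t = (z, y')"
  shows "(norm z)^2 = t" "(norm y')^2 \<le> max ((norm y)^2) ((norm w)^2)"
    "\<And>x. rop z x + rop y' x = rop y x + rop w x"
proof -
  define c where "c = mrgc y w t"
  have "\<exists>c. 0 \<le> c \<and> c \<le> 1 \<and> (norm (c *\<^sub>R y + sqrt (1 - c^2) *\<^sub>R w))^2 = t"
    using merge_move[OF assms(1,2)] .
  then have "0 \<le> c \<and> c \<le> 1 \<and> (norm (c *\<^sub>R y + sqrt (1 - c^2) *\<^sub>R w))^2 = t"
    unfolding c_def mrgc_def by (rule someI_ex)
  then have c: "0 \<le> c" "c \<le> 1" "(norm (c *\<^sub>R y + sqrt (1 - c^2) *\<^sub>R w))^2 = t" by auto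
  define s where "s = sqrt (1 - c^2)"
  have cs: "c^2 + s^2 = 1" unfolding s_def using sqrt_one_minus_sq[OF c(1,2)] by simp
  have zy: "z = c *\<^sub>R y + s *\<^sub>R w" "y' = (-s) *\<^sub>R y + c *\<^sub>R w"
    using assms(3) unfolding mrgstep_def c_def[symmetric] s_def[symmetric] Let_def by auto
  show nz: "(norm z)^2 = t" using c(3) zy unfolding s_def by simp
  show "(norm y')^2 \<le> max ((norm y)^2) ((norm w)^2)"
  proof -
    have e: "t + (norm y')^2 = (norm y)^2 + (norm w)^2" using norm_rot[OF cs, of y w] zy nz by simp
    define A where "A = (norm y)^2"
    define B where "B = (norm w)^2"
    define N where "N = (norm y')^2"
    have "t + N = A + B" "min A B \<le> t" "t \<le> max A B" using e assms(1,2) unfolding A_def B_def N_def by auto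
    then have "N \<le> max A B" by (simp add: min_def max_def split: if_splits)
    then show ?thesis unfolding A_def B_def N_def .
  qed
  show "\<And>x. rop z x + rop y' x = rop y x + rop w x"
    using rop_rot[OF cs] zy by auto
qed

lemma split_props:
  assumes "0 < t" "t \<le> (norm y)^2"
  shows "(norm (sqrt (t / (norm y)^2) *\<^sub>R y))^2 = t"
    "(norm (sqrt (1 - t / (norm y)^2) *\<^sub>R y))^2 = (norm y)^2 - t"
    "rop (sqrt (t / (norm y)^2) *\<^sub>R y) x + rop (sqrt (1 - t / (norm y)^2) *\<^sub>R y) x = rop (y::'a::complex_inner) x"
proof -
  have a: "0 < (norm y)^2" using assms by linarith
  have q: "0 \<le> t / (norm y)^2" "t / (norm y)^2 \<le> 1" using assms a by auto
  show "(norm (sqrt (t / (norm y)^2) *\<^sub>R y))^2 = t"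
    using q a by (simp add: power_mult_distrib)
  show "(norm (sqrt (1 - t / (norm y)^2) *\<^sub>R y))^2 = (norm y)^2 - t"
    using q a by (simp add: power_mult_distrib algebra_simps)
  have "rop (sqrt (t / (norm y)^2) *\<^sub>R y) x + rop (sqrt (1 - t / (norm y)^2) *\<^sub>R y) x
      = (t / (norm y)^2) *\<^sub>R rop y x + (1 - t / (norm y)^2) *\<^sub>R rop y x"
    unfolding rop_scaleR using q by simp
  also have "\<dots> = rop y x" by (simp add: scaleR_left_distrib[symmetric])
  finally show "rop (sqrt (t / (norm y)^2) *\<^sub>R y) x + rop (sqrt (1 - t / (norm y)^2) *\<^sub>R y) x = rop (y::'a::complex_inner) x" .
qed


definition RS :: "'a::complex_inner \<Rightarrow> 'a list \<Rightarrow> 'a" where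
  "RS x ws = sum_list (map (\<lambda>w. rop w x) ws)"

lemma RS_Nil [simp]: "RS x [] = 0" and RS_Cons [simp]: "RS x (w # ws) = rop w x + RS x ws"
  unfolding RS_def by simp_all

definition stepok where
  "stepok e l y ws m z y' ws' m' \<longleftrightarrow>
    (norm z)^2 = 1 - l \<and> (norm y')^2 < 1 \<and> (\<forall>w\<in>set ws'. (norm w)^2 < 1) \<and>
    (m' = m \<or> m' = Suc m) \<and> length ws' \<le> length ws \<and>
    (\<forall>x. rop z x + rop y' x + RS x ws' = rop y x + RS x ws + (if m' = Suc m then rop (e m) x else 0)) \<and>
    (ws = [] \<longrightarrow> ws' = [] \<and> (\<exists>\<sigma> \<gamma> v. y' = \<sigma> *\<^sub>R y + \<gamma> *\<^sub>R v \<and> \<sigma>^2 + \<gamma>^2 \<le> 1 \<and> \<sigma>^2 \<le> 1 - l \<and>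
          ((m' = Suc m \<and> (v = e m \<or> v = - e m)) \<or> (m' = m \<and> \<gamma> = 0)))) \<and>
    (ws = [] \<longrightarrow> m' = m \<longrightarrow> (norm y')^2 < 1/2) \<and>
    (ws = [] \<longrightarrow> (norm y)^2 < 1/2 \<longrightarrow> m' = Suc m) \<and>
    (ws \<noteq> [] \<longrightarrow> length ws' < length ws \<or> (ws' = ws \<and> (norm y')^2 = (norm y)^2 + l)
        \<or> (y' = y \<and> length ws' = length ws \<and> ws' \<noteq> [] \<and> (norm (hd ws'))^2 < 1/2)) \<and>
    (ws \<noteq> [] \<longrightarrow> (norm (hd ws))^2 < 1/2 \<longrightarrow> length ws' < length ws \<or> (ws' = ws \<and> (norm y')^2 = (norm y)^2 + l))"

lemma step_props:
  assumes st: "stepf e l (y, ws, m) = (z, (y', ws', m'))"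
    and ne: "norm (e m) = 1" and l: "0 \<le> l" "l < 1/2"
    and iy: "(norm y)^2 < 1" and iw: "\<forall>w\<in>set ws. (norm w)^2 < 1"
  shows "stepok e l y ws m z y' ws' m'"
proof -
  define t where "t = 1 - l"
  define a where "a = (norm y)^2"
  have t: "1/2 < t" "t \<le> 1" "0 < t" unfolding t_def using l by auto
  have a0: "0 \<le> a" unfolding a_def by simp
  have main: "stepok e l y ws m z y' ws' m'"
    if "stepf e l (y, ws, m) = (let p = mainstep y (sfix y (e m)) l in (fst p, (snd p, ws, Suc m)))"
       and "a < t"
  proof -
    obtain z0 y0 where p: "mainstep y (sfix y (e m)) l = (z0, y0)" by fastforce
    have eqs: "z = z0" "y' = y0" "ws' = ws" "m' = Suc m" using st that(1) p by (auto simp: Let_def)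
    have la: "(norm y)^2 < 1 - l" using that(2) unfolding a_def t_def .
    note mp = mainstep_props[OF la ne l p]
    show ?thesis unfolding stepok_def eqs
      using mp iw la by (auto simp: algebra_simps)
  qed
  show ?thesis
  proof (cases ws)
    case Nil
    show ?thesis
    proof (cases "t \<le> a")
      case False
      then show ?thesis using main st Nil unfolding stepf_def t_def a_def by (auto simp: Let_def)
    next
      case True
      have E: "stepf e l (y, ws, m) = (sqrt (t / a) *\<^sub>R y, (sqrt (1 - t / a) *\<^sub>R y, [], m))"
        using True Nil unfolding stepf_def Let_def t_def a_def by simp
      have eqs: "z = sqrt (t / a) *\<^sub>R y" "y' = sqrt (1 - t / a) *\<^sub>R y" "ws' = []" "m' = m"
        using st unfolding E by simp_all
      have ta: "t \<le> (norm y)^2" using True a_def by simp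
      note sp = split_props[OF t(3) ta]
      have apos: "0 < a" using True t by linarith
      have "t \<le> t / a" using apos iy a_def t by (simp add: divide_simps)
      moreover have "t / a \<le> 1" using apos True by simp
      moreover have sqe: "(sqrt (1 - t / a))^2 = 1 - t / a" using calculation by simp
      ultimately have s1: "(sqrt (1 - t / a))^2 \<le> 1 - l" using t_def l by linarith
      have "0 \<le> t / a" using apos t by simp
      then have s2: "(sqrt (1 - t / a))^2 + 0^2 \<le> 1" unfolding sqe by simp
      have "(norm y')^2 = a - t" using sp(2) eqs a_def by simp
      then have ny: "(norm y')^2 < 1/2" using iy a_def t by linarith
      have ex: "\<exists>\<sigma> \<gamma> v. y' = \<sigma> *\<^sub>R y + \<gamma> *\<^sub>R v \<and> \<sigma>^2 + \<gamma>^2 \<le> 1 \<and> \<sigma>^2 \<le> 1 - l \<and>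
          ((m' = Suc m \<and> (v = e m \<or> v = - e m)) \<or> (m' = m \<and> \<gamma> = 0))"
        using eqs s1 s2 by (intro exI[of _ "sqrt (1 - t / a)"] exI[of _ 0] exI[of _ y]) simp
      have nz: "(norm z)^2 = 1 - l" using sp(1) eqs t_def a_def by simp
      have ny1: "(norm y')^2 < 1" using ny by simp
      have req: "\<forall>x. rop z x + rop y' x + RS x ws' = rop y x + RS x ws + (if m' = Suc m then rop (e m) x else 0)"
        using sp(3) eqs Nil a_def by simp
      have "\<not> (norm y)^2 < 1/2" using True a_def t by linarith
      then show ?thesis unfolding stepok_def
        using ex nz ny ny1 req eqs Nil by simp
    qed
  next
    case (Cons w rest)
    define b where "b = (norm w)^2"
    have b1: "b < 1" using iw Cons b_def by simp
    show ?thesis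
    proof (cases "min a b \<le> t \<and> t \<le> max a b")
      case True
      obtain z0 y0 where p: "mrgstep y w t = (z0, y0)" by fastforce
      have E: "stepf e l (y, ws, m) = (z0, (y0, rest, m))"
        using True Cons p unfolding stepf_def Let_def t_def a_def b_def by simp
      have eqs: "z = z0" "y' = y0" "ws' = rest" "m' = m"
        using st unfolding E by simp_all
      have bt: "min ((norm y)^2) ((norm w)^2) \<le> t" "t \<le> max ((norm y)^2) ((norm w)^2)"
        using True a_def b_def by auto
      note mp = mrgstep_props[OF bt p]
      have "max ((norm y)^2) ((norm w)^2) < 1" using iy b1 b_def by simp
      then have "(norm y0)^2 < 1" using mp(2) by linarith
      then show ?thesis unfolding stepok_def eqs using mp Cons iw t_def
        by (auto simp: add.assoc[symmetric])
    next
      case nb: False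
      show ?thesis
      proof (cases "t \<le> a")
        case False
        then show ?thesis using main st Cons nb unfolding stepf_def t_def a_def b_def by (auto simp: Let_def)
      next
        case True
        have E: "stepf e l (y, ws, m) = (sqrt (t / b) *\<^sub>R w, (y, sqrt (1 - t / b) *\<^sub>R w # rest, m))"
          using True Cons nb unfolding stepf_def Let_def t_def a_def b_def by simp
        have eqs: "z = sqrt (t / b) *\<^sub>R w" "y' = y" "ws' = sqrt (1 - t / b) *\<^sub>R w # rest" "m' = m"
          using st unfolding E by simp_all
        have tb: "t \<le> (norm w)^2" using nb True b_def by (auto simp: min_def max_def split: if_splits)
        note sp = split_props[OF t(3) tb]
        have nw: "(norm (sqrt (1 - t / b) *\<^sub>R w))^2 < 1/2" using sp(2) b_def b1 t by simp
        have "\<not> b < 1/2" using tb t b_def by linarith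
        then show ?thesis unfolding stepok_def eqs using sp Cons iw t_def b_def nw b1 iy
          by (auto simp: add.assoc[symmetric])
      qed
    qed
  qed
qed


section \<open>Scalar decay estimate\<close>

lemma sq_ident: "((S::real)^2 + G^2) * (P^2 + Q^2) - (S * P + G * Q)^2 = (S * Q - G * P)^2"
  by algebra

lemma cs2:
  "(cmod (of_real s * p + of_real g * q))^2 \<le> (s^2 + g^2) * ((cmod p)^2 + (cmod q)^2)"
proof -
  have "cmod (of_real s * p + of_real g * q) \<le> cmod (of_real s * p) + cmod (of_real g * q)"
    by (rule norm_triangle_ineq)
  also have "\<dots> = \<bar>s\<bar> * cmod p + \<bar>g\<bar> * cmod q" by (simp only: norm_mult norm_of_real)
  finally have h: "cmod (of_real s * p + of_real g * q) \<le> \<bar>s\<bar> * cmod p + \<bar>g\<bar> * cmod q" .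
  have "(cmod (of_real s * p + of_real g * q))^2 \<le> (\<bar>s\<bar> * cmod p + \<bar>g\<bar> * cmod q)^2"
    by (rule power_mono[OF h norm_ge_zero])
  also have "\<dots> \<le> (s^2 + g^2) * ((cmod p)^2 + (cmod q)^2)"
  proof -
    have "(s^2 + g^2) * ((cmod p)^2 + (cmod q)^2) - (\<bar>s\<bar> * cmod p + \<bar>g\<bar> * cmod q)^2
        = (\<bar>s\<bar> * cmod q - \<bar>g\<bar> * cmod p)^2"
      using sq_ident[of "\<bar>s\<bar>" "\<bar>g\<bar>" "cmod p" "cmod q"] by (simp only: power2_abs)
    moreover have "0 \<le> (\<bar>s\<bar> * cmod q - \<bar>g\<bar> * cmod p)^2" by (rule zero_le_power2)
    ultimately show ?thesis by linarith
  qed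
  finally show ?thesis .
qed

lemma tail_bound:
  assumes "summable g" "\<And>n. 0 \<le> (g::nat \<Rightarrow> real) n" "a \<le> b"
  shows "sum g {a..<b} \<le> (\<Sum>i. g (i + a))"
proof -
  have "sum g {a..<b} = sum (\<lambda>i. g (i + a)) {0..<b - a}"
    by (subst sum.atLeastLessThan_shift_0) (simp add: comp_def add.commute)
  also have "\<dots> \<le> (\<Sum>i. g (i + a))"
    by (rule sum_le_suminf) (use assms in auto)
  finally show ?thesis .
qed

lemma nonsummable_large:
  assumes "\<not> summable (f::nat \<Rightarrow> real)" "\<And>n. 0 \<le> f n"
  shows "\<exists>D. \<forall>d\<ge>D. B < (\<Sum>i<d. f i)"
proof -
  have "\<not> (\<forall>n. (\<Sum>k\<le>n. f k) \<le> B)"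
    using bounded_imp_summable[of f B] assms by auto
  then obtain n where n: "B < (\<Sum>k\<le>n. f k)" by (auto simp: not_le)
  have "\<forall>d\<ge>Suc n. B < (\<Sum>i<d. f i)"
  proof (intro allI impI)
    fix d assume "Suc n \<le> d"
    then have "(\<Sum>k\<le>n. f k) \<le> (\<Sum>i<d. f i)"
      by (intro sum_mono2) (use assms in auto)
    then show "B < (\<Sum>i<d. f i)" using n by linarith
  qed
  then show ?thesis by blast
qed

lemma decay_abstract:
  fixes \<alpha> \<beta> :: "nat \<Rightarrow> complex" and \<sigma> \<gamma> lam g :: "nat \<Rightarrow> real" and M :: "nat \<Rightarrow> nat"
  assumes rec: "\<And>j. T \<le> j \<Longrightarrow> \<alpha> (Suc j) = of_real (\<sigma> j) * \<alpha> j + of_real (\<gamma> j) * \<beta> j"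
    and sg: "\<And>j. T \<le> j \<Longrightarrow> (\<sigma> j)^2 + (\<gamma> j)^2 \<le> 1"
    and sl: "\<And>j. T \<le> j \<Longrightarrow> (\<sigma> j)^2 \<le> 1 - lam j"
    and Mg: "\<And>j. T \<le> j \<Longrightarrow> (M (Suc j) = Suc (M j) \<and> (cmod (\<beta> j))^2 = g (M j)) \<or> (M (Suc j) = M j \<and> \<gamma> j = 0)"
    and gs: "summable g" "\<And>n. 0 \<le> g n"
    and Mm: "mono M" and Mu: "\<And>N. \<exists>j. N \<le> M j"
    and ls: "\<not> summable lam" "\<And>j. 0 \<le> lam j"
  shows "\<alpha> \<longlonglongrightarrow> 0"
  unfolding LIMSEQ_iff
proof (intro allI impI)
  fix r :: real assume r: "0 < r"
  obtain N where tN: "\<And>n. N \<le> n \<Longrightarrow> norm (\<Sum>i. g (i + n)) < (r/2)^2"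
    using suminf_exist_split[of "(r/2)^2" g] r gs(1) by auto
  obtain j where j: "N \<le> M j" using Mu by blast
  define k where "k = max j T"
  have kT: "T \<le> k" unfolding k_def by simp
  have Mk: "N \<le> M k" using j Mm unfolding k_def mono_def by (meson max.cobounded1 order.trans)
  define \<pi> where "\<pi> d = (\<Prod>i<d. \<sigma> (k + i))" for d
  have Mmono: "M k \<le> M (k + d)" for d using Mm unfolding mono_def by simp
  have claim1: "(cmod (\<alpha> (k + d) - of_real (\<pi> d) * \<alpha> k))^2 \<le> sum g {M k..<M (k + d)}" for d
  proof (induction d)
    case 0
    then show ?case unfolding \<pi>_def by simp
  next
    case (Suc d)
    define p where "p = \<alpha> (k + d) - of_real (\<pi> d) * \<alpha> k"
    have kd: "T \<le> k + d" using kT by simp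
    have eq: "\<alpha> (k + Suc d) - of_real (\<pi> (Suc d)) * \<alpha> k = of_real (\<sigma> (k+d)) * p + of_real (\<gamma> (k+d)) * \<beta> (k+d)"
      unfolding p_def \<pi>_def using rec[OF kd] by (simp add: algebra_simps)
    have IH: "(cmod p)^2 \<le> sum g {M k..<M (k + d)}" using Suc.IH unfolding p_def .
    from Mg[OF kd] show ?case
    proof
      assume A: "M (Suc (k+d)) = Suc (M (k+d)) \<and> (cmod (\<beta> (k+d)))^2 = g (M (k+d))"
      have "(cmod (of_real (\<sigma> (k+d)) * p + of_real (\<gamma> (k+d)) * \<beta> (k+d)))^2
         \<le> ((\<sigma> (k+d))^2 + (\<gamma> (k+d))^2) * ((cmod p)^2 + (cmod (\<beta> (k+d)))^2)"
        by (rule cs2)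
      also have "\<dots> \<le> (cmod p)^2 + (cmod (\<beta> (k+d)))^2"
        using sg[OF kd] by (simp add: mult_left_le_one_le add_nonneg_nonneg)
      also have "\<dots> \<le> sum g {M k..<M (k + d)} + g (M (k+d))" using IH A by simp
      also have "\<dots> = sum g {M k..<M (k + Suc d)}" using A Mmono[of d] by simp
      finally show ?case using eq by simp
    next
      assume B: "M (Suc (k+d)) = M (k+d) \<and> \<gamma> (k+d) = 0"
      have "(\<sigma> (k+d))^2 \<le> 1" using sg[OF kd] B by simp
      then have "(\<sigma> (k+d))^2 * (cmod p)^2 \<le> (cmod p)^2" by (simp add: mult_left_le_one_le)
      then have "(cmod (of_real (\<sigma> (k+d)) * p + of_real (\<gamma> (k+d)) * \<beta> (k+d)))^2 \<le> (cmod p)^2"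
        using B by (simp add: norm_mult power_mult_distrib)
      moreover have r: "sum g {M k..<M (k + Suc d)} = sum g {M k..<M (k + d)}" using B by simp
      ultimately show ?case unfolding eq r using IH by linarith
    qed
  qed
  have claim2: "cmod (\<alpha> (k + d) - of_real (\<pi> d) * \<alpha> k) < r/2" for d
  proof -
    have "sum g {M k..<M (k + d)} \<le> (\<Sum>i. g (i + M k))" by (rule tail_bound) (use gs Mmono in auto)
    also have "\<dots> < (r/2)^2" using tN[OF Mk] by simp
    finally have "(cmod (\<alpha> (k + d) - of_real (\<pi> d) * \<alpha> k))^2 < (r/2)^2" using claim1[of d] by linarith
    then show ?thesis by (rule power2_less_imp_less) (use r in simp)
  qed
  have claim3: "(\<pi> d)^2 \<le> exp (- (\<Sum>i<d. lam (k + i)))" for d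
  proof -
    have "(\<pi> d)^2 = (\<Prod>i<d. (\<sigma> (k + i))^2)" unfolding \<pi>_def by (rule prod_power_distrib)
    also have "\<dots> \<le> (\<Prod>i<d. exp (- lam (k + i)))"
    proof (rule prod_mono)
      fix i assume "i \<in> {..<d}"
      have "(\<sigma> (k + i))^2 \<le> 1 - lam (k + i)" using sl[of "k + i"] kT by simp
      also have "\<dots> \<le> exp (- lam (k + i))" using exp_ge_add_one_self[of "- lam (k + i)"] by simp
      finally show "0 \<le> (\<sigma> (k + i))^2 \<and> (\<sigma> (k + i))^2 \<le> exp (- lam (k + i))" by simp
    qed
    also have "\<dots> = exp (- (\<Sum>i<d. lam (k + i)))" by (simp add: exp_sum sum_negf[symmetric])
    finally show ?thesis .
  qed
  define A2 where "A2 = (cmod (\<alpha> k))^2"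
  define c0 where "c0 = (r/2)^2 / (A2 + 1)"
  have A2: "0 \<le> A2" unfolding A2_def by simp
  have c0: "0 < c0" unfolding c0_def using r A2 by simp
  have ns: "\<not> summable (\<lambda>i. lam (i + k))" using ls(1) by simp
  obtain D where D: "\<And>d. D \<le> d \<Longrightarrow> - ln c0 < (\<Sum>i<d. lam (i + k))"
    using nonsummable_large[OF ns, of "- ln c0"] ls(2) by blast
  show "\<exists>no. \<forall>n\<ge>no. norm (\<alpha> n - 0) < r"
  proof (intro exI allI impI)
    fix n assume n: "k + D \<le> n"
    define d where "d = n - k"
    have nd: "n = k + d" "D \<le> d" using n unfolding d_def by auto
    have "exp (- (\<Sum>i<d. lam (k + i))) < c0"
    proof -
      have "- (\<Sum>i<d. lam (k + i)) < ln c0" using D[OF nd(2)] by (simp add: add.commute)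
      then have "exp (- (\<Sum>i<d. lam (k + i))) < exp (ln c0)" by simp
      then show ?thesis using c0 by simp
    qed
    then have "(\<pi> d)^2 < c0" using claim3[of d] by linarith
    then have "(\<pi> d)^2 * A2 \<le> c0 * A2" using A2 by (simp add: mult_right_mono)
    also have "\<dots> < (r/2)^2" unfolding c0_def using r A2 by (simp add: field_simps)
    finally have "(\<bar>\<pi> d\<bar> * cmod (\<alpha> k))^2 < (r/2)^2" unfolding A2_def by (simp add: power_mult_distrib)
    then have pb: "\<bar>\<pi> d\<bar> * cmod (\<alpha> k) < r/2" by (rule power2_less_imp_less) (use r in simp)
    have "cmod (\<alpha> n) \<le> cmod (\<alpha> (k + d) - of_real (\<pi> d) * \<alpha> k) + cmod (of_real (\<pi> d) * \<alpha> k)"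
      using nd(1) norm_triangle_ineq[of "\<alpha> (k + d) - of_real (\<pi> d) * \<alpha> k" "of_real (\<pi> d) * \<alpha> k"] by simp
    also have "\<dots> < r/2 + r/2" using claim2[of d] pb by (simp add: norm_mult)
    finally show "norm (\<alpha> n - 0) < r" by simp
  qed
qed


fun stseq :: "(nat \<Rightarrow> 'a::complex_inner) \<Rightarrow> (nat \<Rightarrow> real) \<Rightarrow> 'a list \<Rightarrow> nat \<Rightarrow> 'a \<times> 'a list \<times> nat" where
  "stseq e lam ws0 0 = (0, ws0, 0)"
| "stseq e lam ws0 (Suc j) = snd (stepf e (lam j) (stseq e lam ws0 j))"

lemma Re_cinner_rop: "Re (cinner x (rop e x)) = (cmod (cinner e (x::'a::complex_inner)))^2"
proof -
  have "cinner x (rop e x) = cinner e x * cnj (cinner e x)"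
    unfolding rop_def cinner_scaleC_right using cinner_commute[of x e] by simp
  moreover have "of_real ((cmod (cinner e x))^2) = cinner e x * cnj (cinner e x)"
    using complex_norm_square[of "cinner e x"] by (simp only: of_real_power)
  ultimately have "cinner x (rop e x) = of_real ((cmod (cinner e x))^2)" by simp
  then show ?thesis by simp
qed

lemma Re_cinner_cont: "Re (cinner x y) = ((norm (x + y))^2 - (norm (x - y))^2) / 4" for x y :: "'a::complex_inner"
proof -
  have "x - y = x + (- y)" by simp
  then have "(norm (x - y))^2 = (norm x)^2 + (norm y)^2 - 2 * Re (cinner x y)"
    using norm_add_sq[of x "- y"] by (simp add: cinner_minus_right)
  then show ?thesis using norm_add_sq[of x y] by simp
qed

lemma g_summable:
  assumes "(\<lambda>n. rop (e n) x) sums (Ax::'a::complex_inner)"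
  shows "summable (\<lambda>n. (cmod (cinner (e n) x))^2)"
proof -
  define h where "h y = ((norm (x + y))^2 - (norm (x - y))^2) / 4" for y :: 'a
  have hc: "h y = Re (cinner x y)" for y unfolding h_def by (rule Re_cinner_cont[symmetric])
  have "(\<lambda>N. \<Sum>n<N. rop (e n) x) \<longlonglongrightarrow> Ax" using assms unfolding sums_def .
  then have "(\<lambda>N. h (\<Sum>n<N. rop (e n) x)) \<longlonglongrightarrow> h Ax" unfolding h_def by (auto intro!: tendsto_intros)
  moreover have "h (\<Sum>n<N. rop (e n) x) = (\<Sum>n<N. (cmod (cinner (e n) x))^2)" for N
    unfolding hc cinner_sum_right Re_sum Re_cinner_rop by simp
  ultimately have "(\<lambda>n. (cmod (cinner (e n) x))^2) sums h Ax" unfolding sums_def by simp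
  then show ?thesis by (rule sums_summable)
qed

lemma construction:
  fixes e :: "nat \<Rightarrow> 'a::complex_inner" and lam :: "nat \<Rightarrow> real" and ws0 :: "'a list"
  assumes ne: "\<And>m. norm (e m) = 1"
    and lb: "\<And>j. 0 \<le> lam j \<and> lam j < 1/2"
    and ld: "\<not> summable lam"
    and w0: "\<forall>w\<in>set ws0. (norm w)^2 < 1"
    and Asum: "\<And>x. (\<lambda>n. rop (e n) x) sums A x"
  shows "\<exists>z. (\<forall>j. (norm (z j))^2 = 1 - lam j) \<and> (\<forall>x. (\<lambda>j. rop (z j) x) sums (A x + RS x ws0))"
proof -
  define Y where "Y j = fst (stseq e lam ws0 j)" for j
  define W where "W j = fst (snd (stseq e lam ws0 j))" for j
  define M where "M j = snd (snd (stseq e lam ws0 j))" for j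
  define Z where "Z j = fst (stepf e (lam j) (stseq e lam ws0 j))" for j
  have sq: "stseq e lam ws0 j = (Y j, W j, M j)" for j unfolding Y_def W_def M_def by simp
  have st: "stepf e (lam j) (Y j, W j, M j) = (Z j, (Y (Suc j), W (Suc j), M (Suc j)))" for j
    unfolding Z_def sq[symmetric] using sq[of "Suc j"] by (metis prod.collapse stseq.simps(2))
  have Y0: "Y 0 = 0" "W 0 = ws0" "M 0 = 0" unfolding Y_def W_def M_def by simp_all
  have inv: "(norm (Y j))^2 < 1 \<and> (\<forall>w\<in>set (W j). (norm w)^2 < 1)" for j
  proof (induction j)
    case 0 then show ?case using Y0 w0 by simp
  next
    case (Suc j)
    have "stepok e (lam j) (Y j) (W j) (M j) (Z j) (Y (Suc j)) (W (Suc j)) (M (Suc j))"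
      using step_props[OF st ne] lb Suc by auto
    then show ?case unfolding stepok_def by blast
  qed
  have ok: "stepok e (lam j) (Y j) (W j) (M j) (Z j) (Y (Suc j)) (W (Suc j)) (M (Suc j))" for j
    using step_props[OF st ne] lb inv by auto
  note okd = ok[unfolded stepok_def]
  have sumeq: "(\<Sum>i<j. rop (Z i) x) + rop (Y j) x + RS x (W j) = (\<Sum>n<M j. rop (e n) x) + RS x ws0" for j x
  proof (induction j)
    case 0 then show ?case using Y0 by simp
  next
    case (Suc j)
    have E: "rop (Z j) x + rop (Y (Suc j)) x + RS x (W (Suc j)) = rop (Y j) x + RS x (W j) + (if M (Suc j) = Suc (M j) then rop (e (M j)) x else 0)"
      using okd[of j] by blast
    have MM: "(\<Sum>n<M (Suc j). rop (e n) x) = (\<Sum>n<M j. rop (e n) x) + (if M (Suc j) = Suc (M j) then rop (e (M j)) x else 0)"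
      using okd[of j] by auto
    have "(\<Sum>i<Suc j. rop (Z i) x) + rop (Y (Suc j)) x + RS x (W (Suc j))
        = (\<Sum>i<j. rop (Z i) x) + (rop (Z j) x + rop (Y (Suc j)) x + RS x (W (Suc j)))"
      by (simp add: add.assoc)
    also have "\<dots> = ((\<Sum>i<j. rop (Z i) x) + rop (Y j) x + RS x (W j)) + (if M (Suc j) = Suc (M j) then rop (e (M j)) x else 0)"
      unfolding E by (simp add: add.assoc)
    also have "\<dots> = (\<Sum>n<M (Suc j). rop (e n) x) + RS x ws0"
      unfolding Suc MM by (simp add: algebra_simps)
    finally show ?case .
  qed
  have Lmono: "length (W (Suc j)) \<le> length (W j)" for j using okd[of j] by blast
  have "\<exists>T. W T = []"
  proof (rule ccontr)
    assume "\<not> ?thesis"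
    then have nW: "\<And>j. W j \<noteq> []" by auto
    define L where "L j = length (W j)" for j
    obtain j0 where j0: "\<And>j. L j0 \<le> L j" using ex_has_least_nat[of "\<lambda>_. True" 0 L] by auto
    have Lc: "L (Suc j) = L j" if "j0 \<le> j" for j
    proof -
      have "L j \<le> L j0" using lift_Suc_antimono_le[of L, OF _ that] Lmono unfolding L_def by blast
      then show ?thesis using j0[of "Suc j"] Lmono[of j] unfolding L_def by simp
    qed
    define a where "a j = (norm (Y j))^2" for j
    have nm: "(W (Suc j) = W j \<and> a (Suc j) = a j + lam j) \<or> (Y (Suc j) = Y j \<and> W (Suc j) \<noteq> [] \<and> (norm (hd (W (Suc j))))^2 < 1/2)"
      if "j0 \<le> j" for j
      using okd[of j] nW[of j] Lc[OF that] unfolding L_def a_def by auto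
    have hm: "W (Suc j) = W j \<and> a (Suc j) = a j + lam j" if "j0 \<le> j" "(norm (hd (W j)))^2 < 1/2" for j
      using okd[of j] nW[of j] Lc[OF that(1)] that(2) unfolding L_def a_def by auto
    obtain j1 where j1: "\<And>k. j1 \<le> k \<Longrightarrow> a (Suc k) = a k + lam k"
    proof (cases "\<exists>i\<ge>j0. (norm (hd (W i)))^2 < 1/2")
      case True
      then obtain i where i: "j0 \<le> i" "(norm (hd (W i)))^2 < 1/2" by auto
      have "(norm (hd (W (i + d))))^2 < 1/2" for d
      proof (induction d)
        case 0 then show ?case using i by simp
      next
        case (Suc d) then show ?case using hm[of "i + d"] i(1) by simp
      qed
      then have "a (Suc k) = a k + lam k" if "i \<le> k" for k
        using hm[of k] i(1) that by (metis le_add_diff_inverse order.trans)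
      then show ?thesis using that by blast
    next
      case False
      then have "a (Suc k) = a k + lam k" if "j0 \<le> k" for k
        using nm[OF that] that by (metis le_SucI not_le)
      then show ?thesis using that by blast
    qed
    have asum: "a (j1 + n) = a j1 + (\<Sum>i<n. lam (i + j1))" for n
    proof (induction n)
      case 0 then show ?case by simp
    next
      case (Suc n) then show ?case using j1[of "j1 + n"] by (simp add: add.commute add.left_commute)
    qed
    have "(\<Sum>i\<le>n. lam (i + j1)) \<le> 1" for n
    proof -
      have "(\<Sum>i\<le>n. lam (i + j1)) = a (j1 + Suc n) - a j1"
        using asum[of "Suc n"] by (simp add: lessThan_Suc_atMost)
      moreover have "a (j1 + Suc n) < 1" "0 \<le> a j1" using inv unfolding a_def by auto
      ultimately show ?thesis by linarith
    qed
    then have "summable (\<lambda>i. lam (i + j1))" by (intro bounded_imp_summable) (use lb in auto)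
    then show False using ld by simp
  qed
  then obtain T where T: "W T = []" by blast
  have Wnil: "W j = []" if "T \<le> j" for j
    using that
  proof (induction j rule: dec_induct)
    case base then show ?case using T .
  next
    case (step j) then show ?case using okd[of j] by blast
  qed
  have Mstep: "M (Suc j) = M j \<or> M (Suc j) = Suc (M j)" for j using okd[of j] by blast
  have Mm: "mono M" unfolding mono_iff_le_Suc using Mstep by (metis le_SucI order.refl)
  have M2: "Suc (M j) \<le> M (Suc (Suc j))" if "T \<le> j" for j
  proof (cases "M (Suc j) = M j")
    case True
    then have "(norm (Y (Suc j)))^2 < 1/2" using okd[of j] Wnil[OF that] by blast
    moreover have "W (Suc j) = []" using Wnil that by simp
    ultimately have "M (Suc (Suc j)) = Suc (M (Suc j))" using okd[of "Suc j"] by blast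
    then show ?thesis using True by simp
  next
    case False
    then show ?thesis using Mstep[of j] Mm unfolding mono_iff_le_Suc by (metis le_SucI)
  qed
  have Mlin: "n \<le> M (T + 2 * n)" for n
  proof (induction n)
    case 0 then show ?case by simp
  next
    case (Suc n)
    have "Suc (M (T + 2 * n)) \<le> M (Suc (Suc (T + 2 * n)))" by (rule M2) simp
    then show ?case using Suc by simp
  qed
  have Mu: "\<exists>j. N \<le> M j" for N using Mlin by blast
  have Mlim: "filterlim M at_top sequentially"
    unfolding filterlim_at_top
  proof
    fix N
    show "eventually (\<lambda>j. N \<le> M j) sequentially"
      unfolding eventually_sequentially using Mlin[of N] Mm unfolding mono_def by (meson order.trans)
  qed
  have "\<forall>j. \<exists>\<sigma> \<gamma> v. T \<le> j \<longrightarrow> (Y (Suc j) = \<sigma> *\<^sub>R Y j + \<gamma> *\<^sub>R v \<and> \<sigma>^2 + \<gamma>^2 \<le> 1 \<and> \<sigma>^2 \<le> 1 - lam j \<and>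
          ((M (Suc j) = Suc (M j) \<and> (v = e (M j) \<or> v = - e (M j))) \<or> (M (Suc j) = M j \<and> \<gamma> = 0)))"
  proof
    fix j
    show "\<exists>\<sigma> \<gamma> v. T \<le> j \<longrightarrow> (Y (Suc j) = \<sigma> *\<^sub>R Y j + \<gamma> *\<^sub>R v \<and> \<sigma>^2 + \<gamma>^2 \<le> 1 \<and> \<sigma>^2 \<le> 1 - lam j \<and>
          ((M (Suc j) = Suc (M j) \<and> (v = e (M j) \<or> v = - e (M j))) \<or> (M (Suc j) = M j \<and> \<gamma> = 0)))"
    proof (cases "T \<le> j")
      case True
      then show ?thesis using okd[of j] Wnil[OF True] by blast
    qed simp
  qed
  then obtain S G V where SGV: "\<And>j. T \<le> j \<Longrightarrow> Y (Suc j) = S j *\<^sub>R Y j + G j *\<^sub>R V j \<and> (S j)^2 + (G j)^2 \<le> 1 \<and> (S j)^2 \<le> 1 - lam j \<and>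
          ((M (Suc j) = Suc (M j) \<and> (V j = e (M j) \<or> V j = - e (M j))) \<or> (M (Suc j) = M j \<and> G j = 0))"
    by metis
  have alim: "(\<lambda>j. cinner (Y j) x) \<longlonglongrightarrow> 0" for x
  proof (rule decay_abstract[where T = T and \<sigma> = S and \<gamma> = G and \<beta> = "\<lambda>j. cinner (V j) x" and M = M
        and g = "\<lambda>n. (cmod (cinner (e n) x))^2" and lam = lam])
    fix j assume j: "T \<le> j"
    show "cinner (Y (Suc j)) x = of_real (S j) * cinner (Y j) x + of_real (G j) * cinner (V j) x"
      using SGV[OF j] cinner_comb by metis
    show "(S j)^2 + (G j)^2 \<le> 1" "(S j)^2 \<le> 1 - lam j" using SGV[OF j] by auto
    show "(M (Suc j) = Suc (M j) \<and> (cmod (cinner (V j) x))^2 = (cmod (cinner (e (M j)) x))^2) \<or> (M (Suc j) = M j \<and> G j = 0)"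
      using SGV[OF j] by (auto simp: cinner_minus_left)
  next
    show "summable (\<lambda>n. (cmod (cinner (e n) x))^2)" by (rule g_summable[OF Asum])
  qed (use Mm Mu ld lb in auto)
  define z where "z = Z"
  show ?thesis
  proof (intro exI conjI allI)
    fix j show "(norm (z j))^2 = 1 - lam j" unfolding z_def using okd[of j] by blast
  next
    fix x
    have lim1: "(\<lambda>j. \<Sum>n<M j. rop (e n) x) \<longlonglongrightarrow> A x"
      using filterlim_compose[OF Asum[of x, unfolded sums_def] Mlim] .
    have lim2: "(\<lambda>j. rop (Y j) x) \<longlonglongrightarrow> 0"
    proof (rule Lim_null_comparison)
      show "eventually (\<lambda>j. norm (rop (Y j) x) \<le> cmod (cinner (Y j) x)) sequentially"
      proof (intro always_eventually allI)
        fix j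
        have "norm (Y j) \<le> 1"
          using inv[of j] by (metis abs_norm_cancel less_eq_real_def power2_le_imp_le one_power2 zero_le_one)
        then show "norm (rop (Y j) x) \<le> cmod (cinner (Y j) x)"
          unfolding rop_def norm_scaleC by (rule mult_left_le) simp_all
      qed
      show "(\<lambda>j. cmod (cinner (Y j) x)) \<longlonglongrightarrow> 0" using tendsto_norm_zero[OF alim[of x]] .
    qed
    have "(\<lambda>j. (\<Sum>n<M j. rop (e n) x) + RS x ws0 - rop (Y j) x) \<longlonglongrightarrow> A x + RS x ws0 - 0"
      by (intro tendsto_intros lim1 lim2)
    moreover have "eventually (\<lambda>j. (\<Sum>n<M j. rop (e n) x) + RS x ws0 - rop (Y j) x = (\<Sum>i<j. rop (z i) x)) sequentially"
      unfolding eventually_sequentially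
    proof (intro exI allI impI)
      fix j assume "T \<le> j"
      then show "(\<Sum>n<M j. rop (e n) x) + RS x ws0 - rop (Y j) x = (\<Sum>i<j. rop (z i) x)"
        using sumeq[where j=j and x=x] Wnil[of j] unfolding z_def by (simp add: algebra_simps)
    qed
    ultimately show "(\<lambda>j. rop (z j) x) sums (A x + RS x ws0)"
      unfolding sums_def using Lim_transform_eventually by fastforce
  qed
qed


theorem lemma3p7:
  fixes E :: "nat \<Rightarrow> 'a::chilbert_space \<Rightarrow> 'a" and A :: "'a \<Rightarrow> 'a"
    and lam :: "nat \<Rightarrow> real" and K :: nat and s :: "nat \<Rightarrow> real"
    and F :: "nat \<Rightarrow> 'a \<Rightarrow> 'a"
  assumes E_proj: "\<forall>j. rank_one_proj (E j)"
    and A_def: "\<forall>x. (\<lambda>j. E j x) sums A x"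
    and lam_bounds: "\<forall>j. 0 \<le> lam j \<and> lam j < 1/2"
    and lam_div: "\<not> summable lam"
    and K_pos: "1 \<le> K"
    and s_bounds: "\<forall>k\<in>{1..K}. 0 \<le> s k \<and> s k < 1"
    and F_proj: "\<forall>k\<in>{1..K}. rank_one_proj (F k)"
  shows "(\<lambda>j. 1 - lam j) \<in> Adm (\<lambda>x. A x + (\<Sum>k=1..K. s k *\<^sub>R F k x))"
proof -
  have "\<forall>j. \<exists>v. norm v = 1 \<and> (\<forall>x. E j x = rop v x)"
    using E_proj unfolding rank_one_proj_def rop_def by blast
  then obtain e where e: "\<And>j. norm (e j) = 1" "\<And>j x. E j x = rop (e j) x" by metis
  have "\<forall>k. \<exists>v. k \<in> {1..K} \<longrightarrow> norm v = 1 \<and> (\<forall>x. F k x = rop v x)"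
    using F_proj unfolding rank_one_proj_def rop_def by blast
  then obtain f where f: "\<And>k. k \<in> {1..K} \<Longrightarrow> norm (f k) = 1 \<and> (\<forall>x. F k x = rop (f k) x)" by metis
  define ws0 where "ws0 = map (\<lambda>k. sqrt (s k) *\<^sub>R f k) [1..<Suc K]"
  have w0: "\<forall>w\<in>set ws0. (norm w)^2 < 1"
  proof
    fix w assume "w \<in> set ws0"
    then obtain k where k: "k \<in> {1..K}" "w = sqrt (s k) *\<^sub>R f k" unfolding ws0_def
      by (metis (no_types, lifting) atLeastLessThanSuc_atLeastAtMost imageE set_map set_upt)
    then show "(norm w)^2 < 1" using f[OF k(1)] s_bounds k(1) by (simp add: power_mult_distrib)
  qed
  have RS0: "RS x ws0 = (\<Sum>k=1..K. s k *\<^sub>R F k x)" for x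
  proof -
    have "RS x ws0 = (\<Sum>k\<leftarrow>[1..<Suc K]. rop (sqrt (s k) *\<^sub>R f k) x)"
      unfolding RS_def ws0_def by (simp add: comp_def)
    also have "\<dots> = (\<Sum>k\<in>{1..K}. rop (sqrt (s k) *\<^sub>R f k) x)"
    proof -
      have "(\<Sum>k\<leftarrow>[1..<Suc K]. rop (sqrt (s k) *\<^sub>R f k) x) = (\<Sum>k\<in>set [1..<Suc K]. rop (sqrt (s k) *\<^sub>R f k) x)"
        by (rule sum_set_upt_conv_sum_list_nat[symmetric])
      moreover have "set [1..<Suc K] = {1..K}" by auto
      ultimately show ?thesis by simp
    qed
    also have "\<dots> = (\<Sum>k=1..K. s k *\<^sub>R F k x)"
    proof (rule sum.cong)
      fix k assume k: "k \<in> {1..K}"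
      show "rop (sqrt (s k) *\<^sub>R f k) x = s k *\<^sub>R F k x"
        unfolding rop_scaleR using f[OF k] s_bounds k by simp
    qed simp
    finally show ?thesis .
  qed
  have Asum: "\<And>x. (\<lambda>n. rop (e n) x) sums A x" using A_def e(2) by simp
  obtain z where z: "\<And>j. (norm (z j))^2 = 1 - lam j" "\<And>x. (\<lambda>j. rop (z j) x) sums (A x + RS x ws0)"
    using construction[OF e(1) _ lam_div w0 Asum] lam_bounds by blast
  define P where "P j = rop ((1 / norm (z j)) *\<^sub>R z j)" for j
  have zpos: "0 < norm (z j)" for j
  proof -
    have "lam j < 1/2" using lam_bounds by blast
    then have "0 < (norm (z j))^2" using z(1)[of j] by linarith
    then show ?thesis by simp
  qed
  have Pr: "rank_one_proj (P j)" for j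
    unfolding P_def by (rule rop_unit) (use zpos[of j] in simp)
  have PP: "(1 - lam j) *\<^sub>R P j x = rop (z j) x" for j x
  proof -
    have "(1 - lam j) *\<^sub>R P j x = ((norm (z j))^2 * (1 / norm (z j))^2) *\<^sub>R rop (z j) x"
      unfolding P_def rop_scaleR z(1)[symmetric] by simp
    also have "\<dots> = rop (z j) x" using zpos[of j] by (simp add: power_one_over)
    finally show ?thesis .
  qed
  show ?thesis
    unfolding Adm_def
  proof (intro CollectI conjI allI exI[of _ P])
    show "bounded (range (\<lambda>j. 1 - lam j))"
      unfolding bounded_iff
    proof (intro exI[of _ 1] ballI)
      fix y assume "y \<in> range (\<lambda>j. 1 - lam j)"
      then obtain j where "y = 1 - lam j" by auto
      moreover have "0 \<le> lam j" "lam j < 1/2" using lam_bounds by auto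
      ultimately show "norm y \<le> 1" by simp
    qed
    fix j have "lam j < 1/2" using lam_bounds by blast
    then show "0 \<le> 1 - lam j" by linarith
  next
    fix j show "rank_one_proj (P j)" by (rule Pr)
  next
    fix x show "(\<lambda>j. (1 - lam j) *\<^sub>R P j x) sums (A x + (\<Sum>k=1..K. s k *\<^sub>R F k x))"
      unfolding PP RS0[symmetric] by (rule z(2))
  qed
qed
end
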